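(* For any $n\geq1$ and any odd $b\geq1$, the set $R_n(b)$ listed in $\prec$ order (increasing) is a $3$-adjacent Gray code: any two consecutive sequences in the list differ in at most $3$ positions, and these positions are consecutive.
   Context: A restricted growth function of length $n$ is an integer sequence $s_1\ldots s_n$ with $s_1=0$ and $0\leq s_{i+1}\leq \max\{s_j\}_{j=1}^i+1$ for $1\leq i\leq n-1$; $R_n$ is the set of these. For an integer $b\geq1$, $R_n(b)=\{s_1\ldots s_n\in R_n: \max_i s_i\leq b\}$. The Reflected Gray Code Order $\prec$ on length-$n$ sequences of nonnegative integers: $s_1\ldots s_n\prec t_1\ldots t_n$ if, for the smallest $k$ with $s_k\neq t_k$, either $\sum_{i=1}^{k-1}s_i$ is even and $s_k<t_k$, or $\sum_{i=1}^{k-1}s_i$ is odd and $s_k>t_k$. A list of same-length sequences is a $d$-Gray code if the Hamming distance (number of differing positions) between successive sequences is at most $d$; it is a $d$-adjacent Gray code if in addition the positions where successive sequences differ are adjacent. *)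

theory Defs
  imports Main
begin

text \<open>Sequences s_1...s_n are represented as lists of naturals; position i (1-based)
  corresponds to list index i-1.\<close>

definition is_rgf :: "nat \<Rightarrow> nat list \<Rightarrow> bool" where
  "is_rgf n s \<longleftrightarrow> length s = n \<and> n \<ge> 1 \<and> s ! 0 = 0 \<and>
     (\<forall>i. 1 \<le> i \<and> i \<le> n - 1 \<longrightarrow> s ! i \<le> Max (set (take i s)) + 1)"


definition Rb :: "nat \<Rightarrow> nat \<Rightarrow> nat list set" where
  "Rb n b = {s. is_rgf n s \<and> Max (set s) \<le> b}"

definition rgc_less :: "nat list \<Rightarrow> nat list \<Rightarrow> bool" where
  "rgc_less s t \<longleftrightarrow> length s = length t \<and>
     (\<exists>k < length s. take k s = take k t \<and> s ! k \<noteq> t ! k \<and>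
        ((even (sum_list (take k s)) \<and> s ! k < t ! k) \<or>
         (odd (sum_list (take k s)) \<and> s ! k > t ! k)))"

definition diff_pos :: "nat list \<Rightarrow> nat list \<Rightarrow> nat set" where
  "diff_pos s t = {i. i < length s \<and> s ! i \<noteq> t ! i}"

definition adjacent_step :: "nat \<Rightarrow> nat list \<Rightarrow> nat list \<Rightarrow> bool" where
  "adjacent_step d s t \<longleftrightarrow> card (diff_pos s t) \<le> d \<and>
     (\<forall>i j k. i \<in> diff_pos s t \<and> j \<in> diff_pos s t \<and> i \<le> k \<and> k \<le> j \<longrightarrow> k \<in> diff_pos s t)"

definition is_d_adjacent_gray_code :: "nat \<Rightarrow> nat list list \<Rightarrow> bool" where
  "is_d_adjacent_gray_code d L \<longleftrightarrow>
     (\<forall>i. i + 1 < length L \<longrightarrow> adjacent_step d (L ! i) (L ! (i + 1)))"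

end

theory Submission
  imports Defs
begin

lemma Rb_iff: "x \<in> Rb n b \<longleftrightarrow> is_rgf n x \<and> (\<forall>v\<in>set x. v \<le> b)"
proof -
  have "is_rgf n x \<Longrightarrow> set x \<noteq> {}" unfolding is_rgf_def by auto
  then show ?thesis unfolding Rb_def by (auto simp: Max_le_iff)
qed

lemma nth_le_Max_take: "j < i \<Longrightarrow> i \<le> length x \<Longrightarrow> x ! j \<le> Max (set (take i x))"
  by (rule Max_ge) (auto simp: in_set_conv_nth intro!: exI[of _ j])

lemma u_valid:
  assumes x: "x \<in> Rb n b" and j: "1 \<le> j" "j < n" and c: "c \<le> b" "c \<le> Max (set (take j x)) + 1"
  shows "take j x @ c # replicate (n - j - 1) 0 \<in> Rb n b"
proof -
  define u where "u = take j x @ c # replicate (n - j - 1) 0"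
  have rx: "is_rgf n x" and bx: "\<forall>v\<in>set x. v \<le> b" using x by (auto simp: Rb_iff)
  have lx: "length x = n" using rx by (simp add: is_rgf_def)
  have lu: "length u = n" using j lx by (simp add: u_def)
  have tk: "take i u = take i x" if "i \<le> j" for i using that j lx by (simp add: u_def)
  have nt: "u ! i = (if i < j then x ! i else if i = j then c else 0)" if "i < n" for i
    using that j lx by (auto simp: u_def nth_append)
  have "is_rgf n u"
    unfolding is_rgf_def
  proof (intro conjI allI impI)
    show "length u = n" by fact
    show "1 \<le> n" using j by simp
    show "u ! 0 = 0" using nt[of 0] j rx by (simp add: is_rgf_def)
    fix i assume i: "1 \<le> i \<and> i \<le> n - 1"
    show "u ! i \<le> Max (set (take i u)) + 1"
    proof (cases "i < j")
      case True then show ?thesis using nt[of i] tk[of i] i j rx by (simp add: is_rgf_def)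
    next
      case False then show ?thesis using nt[of i] tk[of i] i j c by auto
    qed
  qed
  moreover have "\<forall>v\<in>set u. v \<le> b"
    using bx c(1) by (auto simp: u_def dest: in_set_takeD)
  ultimately show ?thesis by (simp add: Rb_iff u_def)
qed

lemma rgc_lessI:
  assumes "length x = length y" "k < length x" "take k x = take k y" "x ! k \<noteq> y ! k"
    "even (sum_list (take k x)) \<Longrightarrow> x ! k < y ! k"
    "odd (sum_list (take k x)) \<Longrightarrow> x ! k > y ! k"
  shows "rgc_less x y"
  unfolding rgc_less_def using assms by blast

lemma rgc_asym: "rgc_less x y \<Longrightarrow> \<not> rgc_less y x"
proof
  assume a: "rgc_less x y" and b: "rgc_less y x"
  from a obtain k where k: "k < length x" "take k x = take k y" "x ! k \<noteq> y ! k"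
    "(even (sum_list (take k x)) \<and> x ! k < y ! k) \<or> (odd (sum_list (take k x)) \<and> x ! k > y ! k)"
    unfolding rgc_less_def by blast
  from b obtain l where l: "l < length y" "take l y = take l x" "y ! l \<noteq> x ! l"
    "(even (sum_list (take l y)) \<and> y ! l < x ! l) \<or> (odd (sum_list (take l y)) \<and> y ! l > x ! l)"
    unfolding rgc_less_def by blast
  have len: "length x = length y" using a by (simp add: rgc_less_def)
  show False
  proof (cases k l rule: linorder_cases)
    case less
    then have "x ! k = y ! k" using l(2) by (metis nth_take)
    then show ?thesis using k by simp
  next
    case greater
    then have "x ! l = y ! l" using k(2) by (metis nth_take)
    then show ?thesis using l by simp
  next
    case equal
    then show ?thesis using k l by auto
  qed
qed

lemma zeros_from:
  assumes "P (sum_list (take j0 x))"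
    and "\<And>j. j0 \<le> j \<Longrightarrow> j < length x \<Longrightarrow> P (sum_list (take j x)) \<Longrightarrow> x ! j = 0"
  shows "j0 \<le> j \<Longrightarrow> j < length x \<Longrightarrow> x ! j = 0"
proof -
  have "j0 + d \<le> length x \<Longrightarrow> P (sum_list (take (j0 + d) x))" for d
  proof (induction d)
    case 0 then show ?case using assms(1) by simp
  next
    case (Suc d)
    have "take (j0 + Suc d) x = take (j0 + d) x @ [x ! (j0 + d)]"
      using Suc.prems by (simp add: take_Suc_conv_app_nth)
    moreover have "x ! (j0 + d) = 0" using Suc assms(2)[of "j0+d"] by simp
    ultimately show ?case using Suc by simp
  qed
  moreover assume "j0 \<le> j" "j < length x"
  ultimately show "x ! j = 0" using assms(2)[of j] by (metis le_add_diff_inverse less_imp_le)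
qed

lemma Max_snoc: "xs \<noteq> [] \<Longrightarrow> Max (set (xs @ [c])) = max (Max (set xs)) c"
  by (simp add: Max_insert max.commute)


lemma main:
  assumes bodd: "odd b" and n: "n \<ge> 1"
    and S: "s \<in> Rb n b" and T: "t \<in> Rb n b" and lt: "rgc_less s t"
    and nob: "\<And>u. u \<in> Rb n b \<Longrightarrow> rgc_less s u \<Longrightarrow> rgc_less u t \<Longrightarrow> False"
  shows "adjacent_step 3 s t"
proof -
  have rs: "is_rgf n s" and bs: "\<forall>v\<in>set s. v \<le> b" using S by (auto simp: Rb_iff)
  have rt: "is_rgf n t" and bt: "\<forall>v\<in>set t. v \<le> b" using T by (auto simp: Rb_iff)
  have ls: "length s = n" and lt': "length t = n" using rs rt by (auto simp: is_rgf_def)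
  from lt obtain k where k: "k < n" "take k s = take k t" "s ! k \<noteq> t ! k"
    and dir: "(even (sum_list (take k s)) \<and> s ! k < t ! k) \<or> (odd (sum_list (take k s)) \<and> s ! k > t ! k)"
    unfolding rgc_less_def using ls by blast
  have k1: "k \<ge> 1" using k rs rt by (cases k) (auto simp: is_rgf_def)
  define \<sigma> where "\<sigma> = sum_list (take k s)"
  define m where "m = Max (set (take k s))"
  define a where "a = s ! k"
  define a' where "a' = t ! k"
  have sb: "i < n \<Longrightarrow> s ! i \<le> b" for i using bs ls by auto
  have tb: "i < n \<Longrightarrow> t ! i \<le> b" for i using bt lt' by auto
  have sr: "1 \<le> i \<Longrightarrow> i < n \<Longrightarrow> s ! i \<le> Max (set (take i s)) + 1" for i
    using rs by (simp add: is_rgf_def)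
  have tr: "1 \<le> i \<Longrightarrow> i < n \<Longrightarrow> t ! i \<le> Max (set (take i t)) + 1" for i
    using rt by (simp add: is_rgf_def)
  have step1: "(even \<sigma> \<and> a' = a + 1) \<or> (odd \<sigma> \<and> a = a' + 1)"
  proof (rule ccontr)
    assume nc: "\<not> ?thesis"
    show False
    proof (cases "even \<sigma>")
      case True
      then have "a < a'" using dir by (simp add: \<sigma>_def a_def a'_def)
      with True nc have "a + 1 < a'" by auto
      define u where "u = take k t @ (a+1) # replicate (n - k - 1) 0"
      have "u \<in> Rb n b" unfolding u_def
        by (rule u_valid[OF T k1 k(1)]) (use \<open>a+1<a'\<close> tb[OF k(1)] tr[OF k1 k(1)] in \<open>auto simp: a'_def\<close>)
      moreover have "rgc_less s u"
        by (rule rgc_lessI[where k=k]) (use k ls lt' True in \<open>auto simp: u_def nth_append a_def \<sigma>_def\<close>)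
      moreover have "rgc_less u t"
        by (rule rgc_lessI[where k=k]) (use k ls lt' True \<open>a+1<a'\<close> in \<open>auto simp: u_def nth_append a_def a'_def \<sigma>_def\<close>)
      ultimately show False using nob by blast
    next
      case False
      then have "a > a'" using dir by (simp add: \<sigma>_def a_def a'_def)
      with False nc have "a' + 1 < a" by auto
      define u where "u = take k t @ (a'+1) # replicate (n - k - 1) 0"
      have "u \<in> Rb n b" unfolding u_def
        by (rule u_valid[OF T k1 k(1)]) (use \<open>a'+1<a\<close> sb[OF k(1)] sr[OF k1 k(1)] k in \<open>auto simp: a'_def a_def\<close>)
      moreover have "rgc_less s u"
        by (rule rgc_lessI[where k=k]) (use k ls lt' False \<open>a'+1<a\<close> in \<open>auto simp: u_def nth_append a_def \<sigma>_def\<close>)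
      moreover have "rgc_less u t"
        by (rule rgc_lessI[where k=k]) (use k ls lt' False in \<open>auto simp: u_def nth_append a_def a'_def \<sigma>_def\<close>)
      ultimately show False using nob by blast
    qed
  qed
  have gs: "s ! j = (if even (sum_list (take j s)) then min b (Max (set (take j s)) + 1) else 0)"
    if j: "k < j" "j < n" for j
  proof (rule ccontr)
    define g where "g = (if even (sum_list (take j s)) then min b (Max (set (take j s)) + 1) else 0)"
    assume ne: "s ! j \<noteq> (if even (sum_list (take j s)) then min b (Max (set (take j s)) + 1) else 0)"
    define u where "u = take j s @ g # replicate (n - j - 1) 0"
    have "u \<in> Rb n b" unfolding u_def
      by (rule u_valid[OF S _ j(2)]) (use j k1 in \<open>auto simp: g_def\<close>)
    moreover have "rgc_less s u"
      by (rule rgc_lessI[where k=j]) (use j ls ne sr[of j] sb[of j] k1 in \<open>auto simp: u_def nth_append g_def\<close>)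
    moreover have "rgc_less u t"
      by (rule rgc_lessI[where k=k]) (use k ls lt' j dir in \<open>auto simp: u_def nth_append\<close>)
    ultimately show False using nob by blast
  qed
  have gt: "t ! j = (if even (sum_list (take j t)) then 0 else min b (Max (set (take j t)) + 1))"
    if j: "k < j" "j < n" for j
  proof (rule ccontr)
    define g where "g = (if even (sum_list (take j t)) then 0 else min b (Max (set (take j t)) + 1))"
    assume ne: "t ! j \<noteq> (if even (sum_list (take j t)) then 0 else min b (Max (set (take j t)) + 1))"
    define u where "u = take j t @ g # replicate (n - j - 1) 0"
    have "u \<in> Rb n b" unfolding u_def
      by (rule u_valid[OF T _ j(2)]) (use j k1 in \<open>auto simp: g_def\<close>)
    moreover have "rgc_less u t"
      by (rule rgc_lessI[where k=j]) (use j lt' ne tr[of j] tb[of j] k1 in \<open>auto simp: u_def nth_append g_def\<close>)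
    moreover have "rgc_less s u"
      by (rule rgc_lessI[where k=k]) (use k ls lt' j dir in \<open>auto simp: u_def nth_append\<close>)
    ultimately show False using nob by blast
  qed
  have ne: "take k s \<noteq> []" using k1 k ls by auto
  define E where "E = even (\<sigma> + a)"
  have E': "even (\<sigma> + a') \<longleftrightarrow> \<not> E" using step1 unfolding E_def by auto
  define v where "v = min b (max m a + 1)"
  define v' where "v' = min b (max m a' + 1)"
  have tS1: "take (Suc k) s = take k s @ [a]" using k ls by (simp add: a_def take_Suc_conv_app_nth)
  have tT1: "take (Suc k) t = take k s @ [a']" using k lt' by (simp add: a'_def take_Suc_conv_app_nth)
  have S1: "s ! Suc k = (if E then v else 0)" if "Suc k < n"
    using gs[of "Suc k"] that tS1 ne by (simp add: Max_snoc E_def v_def \<sigma>_def m_def max.commute)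
  have T1: "t ! Suc k = (if E then v' else 0)" if "Suc k < n"
    using gt[of "Suc k"] that tT1 ne E' by (simp add: Max_snoc v'_def \<sigma>_def m_def max.commute)
  have vb: "v \<le> b" "v' \<le> b" by (auto simp: v_def v'_def)
  have S2: "s ! Suc (Suc k) = (if E \<and> even v then v + 1 else 0)" if "Suc (Suc k) < n"
  proof -
    have tS2: "take (Suc (Suc k)) s = take k s @ [a, s ! Suc k]" using that ls tS1
      by (simp add: take_Suc_conv_app_nth)
    have "s ! Suc (Suc k) = (if even (\<sigma> + a + s ! Suc k) then min b (max (max m a) (s ! Suc k) + 1) else 0)"
    proof -
      have su: "sum_list (take (Suc (Suc k)) s) = \<sigma> + a + s ! Suc k" by (simp add: tS2 \<sigma>_def)
      have "take k s @ [a, s ! Suc k] = (take k s @ [a]) @ [s ! Suc k]" by simp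
      then have mx: "Max (set (take (Suc (Suc k)) s)) = max (max m a) (s ! Suc k)"
        using ne by (simp only: tS2 Max_snoc m_def) simp
      show ?thesis using gs[of "Suc (Suc k)"] that unfolding su mx by simp
    qed
    moreover have "E \<Longrightarrow> even v \<Longrightarrow> v = max m a + 1 \<and> v < b" using bodd by (auto simp: v_def min_def split: if_splits)
    ultimately show ?thesis using S1 that by (auto simp: E_def)
  qed
  have T2: "t ! Suc (Suc k) = (if E \<and> even v' then v' + 1 else 0)" if "Suc (Suc k) < n"
  proof -
    have tT2: "take (Suc (Suc k)) t = take k s @ [a', t ! Suc k]" using that lt' tT1
      by (simp add: take_Suc_conv_app_nth)
    have "t ! Suc (Suc k) = (if even (\<sigma> + a' + t ! Suc k) then 0 else min b (max (max m a') (t ! Suc k) + 1))"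
    proof -
      have su: "sum_list (take (Suc (Suc k)) t) = \<sigma> + a' + t ! Suc k" by (simp add: tT2 \<sigma>_def)
      have "take k s @ [a', t ! Suc k] = (take k s @ [a']) @ [t ! Suc k]" by simp
      then have mx: "Max (set (take (Suc (Suc k)) t)) = max (max m a') (t ! Suc k)"
        using ne by (simp only: tT2 Max_snoc m_def) simp
      show ?thesis using gt[of "Suc (Suc k)"] that unfolding su mx by simp
    qed
    moreover have "E \<Longrightarrow> even v' \<Longrightarrow> v' = max m a' + 1 \<and> v' < b" using bodd by (auto simp: v'_def min_def split: if_splits)
    ultimately show ?thesis using T1 that E' by auto
  qed
  have S3: "s ! j = 0" if "Suc (Suc k) < j" "j < n" for j
  proof -
    have tS3: "take (Suc (Suc (Suc k))) s = take k s @ [a, s ! Suc k, s ! Suc (Suc k)]"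
      using that ls tS1 by (simp add: take_Suc_conv_app_nth)
    have "odd (sum_list (take (Suc (Suc (Suc k))) s))"
      using tS3 S1 S2 that by (auto simp: \<sigma>_def[symmetric] E_def)
    then show ?thesis
      by (rule zeros_from[where P=odd]) (use that ls gs in auto)
  qed
  have T3: "t ! j = 0" if "Suc (Suc k) < j" "j < n" for j
  proof -
    have tT3: "take (Suc (Suc (Suc k))) t = take k s @ [a', t ! Suc k, t ! Suc (Suc k)]"
      using that lt' tT1 by (simp add: take_Suc_conv_app_nth)
    have "even (sum_list (take (Suc (Suc (Suc k))) t))"
      using tT3 T1 T2 that E' by (auto simp: \<sigma>_def[symmetric])
    then show ?thesis
      by (rule zeros_from[where P=even]) (use that lt' gt in auto)
  qed
  define D where "D = diff_pos s t"
  have Dsub: "D \<subseteq> {k, Suc k, Suc (Suc k)}"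
  proof
    fix i assume i: "i \<in> D"
    then have il: "i < n" "s ! i \<noteq> t ! i" using ls by (auto simp: D_def diff_pos_def)
    have "\<not> i < k" using il k(2) by (metis nth_take)
    moreover have "\<not> Suc (Suc k) < i" using il S3 T3 by auto
    ultimately show "i \<in> {k, Suc k, Suc (Suc k)}" by auto
  qed
  have kD: "k \<in> D" using k ls by (simp add: D_def diff_pos_def)
  have k2: "Suc (Suc k) \<in> D \<Longrightarrow> Suc k \<in> D"
  proof -
    assume "Suc (Suc k) \<in> D"
    then have l: "Suc (Suc k) < n" "s ! Suc (Suc k) \<noteq> t ! Suc (Suc k)" using ls by (auto simp: D_def diff_pos_def)
    then have "s ! Suc k \<noteq> t ! Suc k" using S1 S2 T1 T2 by (auto split: if_splits)
    then show "Suc k \<in> D" using l ls by (simp add: D_def diff_pos_def)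
  qed
  have "card D \<le> 3"
    using card_mono[OF _ Dsub] by (simp add: card_insert_if)
  moreover have "\<forall>i j l. i \<in> D \<and> j \<in> D \<and> i \<le> l \<and> l \<le> j \<longrightarrow> l \<in> D"
  proof (intro allI impI)
    fix i j l assume h: "i \<in> D \<and> j \<in> D \<and> i \<le> l \<and> l \<le> j"
    then have "i \<in> {k, Suc k, Suc (Suc k)}" "j \<in> {k, Suc k, Suc (Suc k)}" using Dsub by auto
    then show "l \<in> D" using h kD k2 by (auto simp: le_Suc_eq)
  qed
  ultimately show ?thesis unfolding adjacent_step_def D_def by blast
qed

theorem theorem1:
  fixes n b :: nat and L :: "nat list list"
  assumes "n \<ge> 1" and "b \<ge> 1" and "odd b"
    and "set L = Rb n b" and "sorted_wrt rgc_less L"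
  shows "is_d_adjacent_gray_code 3 L"
  unfolding is_d_adjacent_gray_code_def
proof (intro allI impI)
  fix i assume i: "i + 1 < length L"
  have sw: "\<And>p q. p < q \<Longrightarrow> q < length L \<Longrightarrow> rgc_less (L ! p) (L ! q)"
    using assms(5) by (simp add: sorted_wrt_iff_nth_less)
  show "adjacent_step 3 (L ! i) (L ! (i + 1))"
  proof (rule main[OF assms(3) assms(1)])
    show "L ! i \<in> Rb n b" "L ! (i+1) \<in> Rb n b" using i assms(4) nth_mem[of i L] nth_mem[of "i+1" L] by auto
    show "rgc_less (L ! i) (L ! (i + 1))" using sw i by simp
    fix u assume u: "u \<in> Rb n b" "rgc_less (L ! i) u" "rgc_less u (L ! (i + 1))"
    then obtain j where j: "j < length L" "u = L ! j" using assms(4) by (metis in_set_conv_nth)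
    consider "j < i" | "j = i" | "j = i + 1" | "i + 1 < j" by linarith
    then show False
    proof cases
      case 1 then show ?thesis using sw[of j i] i j u rgc_asym by auto
    next
      case 2 then show ?thesis using u j rgc_asym by blast
    next
      case 3 then show ?thesis using u j rgc_asym by blast
    next
      case 4 then show ?thesis using sw[of "i+1" j] i j u rgc_asym by auto
    qed
  qed
qed

end
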